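(* Assume hypotheses (A) and (B) and that $p_{ij}=p<1/(d-1)$ for all $i\ne j$. Let $q=p/(1-(d-2)p)$. Let $\gamma=(\gamma_1,\dots,\gamma_d)$ satisfy $0<\gamma_i<\mu_i/\nu_i-1$ for all $i$ and $$\sum_{j=1}^d\frac{\max_{1\le i\le d}\log(1+q\gamma_i)-\log(1+q\gamma_j)}{\log(1+\gamma_j)-\log(1+q\gamma_j)}<1.$$ Then the function $h_\gamma(x)=\sum_{i=1}^d(1+\gamma_i)^{x^i}(1+q\gamma_i)^{\sum_{j\ne i}x^j}$ satisfies $$\limsup_{|x|\to\infty}\frac{\mathcal{L}h_\gamma(x)}{h_\gamma(x)}=-\Bigl(1-\frac{(d-1)p^2}{1-(d-2)p}\Bigr)\min_{1\le i\le d}\gamma_i\Bigl(\frac{\mu_i}{1+\gamma_i}-\nu_i\Bigr)<0.$$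
   Context: Jackson network with $d$ queues: arrival rates $\lambda_i\ge0$, service rates $\mu_i>0$, routing matrix $P=(p_{ij})_{i,j=1}^d$ nonnegative with $p_{ii}=0$, $\sum_jp_{ij}\le1$, $p_{i0}=1-\sum_jp_{ij}$. With $\epsilon^i$ the unit vectors, $q(\epsilon^i)=\lambda_i$, $q(-\epsilon^i)=\mu_ip_{i0}$, $q(\epsilon^j-\epsilon^i)=\mu_ip_{ij}$, zero otherwise (this jump kernel, not the scalar $q$ of the claim); the process on $\mathbb{Z}_+^d$ has generator $\mathcal{L}f(y)=\sum_{z\in\mathbb{Z}_+^d}q(z-y)(f(z)-f(y))$. Hypothesis (A): this kernel is irreducible on $\mathbb{Z}^d$ (equivalently spectral radius of $P$ $<1$ and for every $i$ some $\lambda_jp^{(n)}_{ji}>0$); then the traffic equations $\nu_j=\lambda_j+\sum_i\nu_ip_{ij}$ have a unique solution with $\nu_i>0$. Hypothesis (B): $\nu_i<\mu_i$ for all $i$. *)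

theory Defs
  imports "HOL-Analysis.Analysis"
begin

text \<open>Queues are indexed by a finite type 'd with d = CARD('d).
  States of the network are elements of Z_+^d, i.e. functions 'd => nat;
  jumps live in Z^d, i.e. functions 'd => int.\<close>

definition unit_vec :: "'d \<Rightarrow> ('d \<Rightarrow> int)" where
  "unit_vec i = (\<lambda>k. if k = i then 1 else 0)"

definition exit_prob :: "('d::finite \<Rightarrow> 'd \<Rightarrow> real) \<Rightarrow> 'd \<Rightarrow> real" where
  "exit_prob P i = 1 - (\<Sum>j\<in>UNIV. P i j)"

definition jackson_kernel ::
  "('d::finite \<Rightarrow> real) \<Rightarrow> ('d \<Rightarrow> real) \<Rightarrow> ('d \<Rightarrow> 'd \<Rightarrow> real) \<Rightarrow> ('d \<Rightarrow> int) \<Rightarrow> real" where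
  "jackson_kernel lam mu P z =
     (\<Sum>i\<in>UNIV. (if z = unit_vec i then lam i else 0)
              + (if z = - unit_vec i then mu i * exit_prob P i else 0)
              + (\<Sum>j\<in>UNIV. if j \<noteq> i \<and> z = unit_vec j - unit_vec i then mu i * P i j else 0))"

definition jackson_gen ::
  "('d::finite \<Rightarrow> real) \<Rightarrow> ('d \<Rightarrow> real) \<Rightarrow> ('d \<Rightarrow> 'd \<Rightarrow> real)
     \<Rightarrow> (('d \<Rightarrow> nat) \<Rightarrow> real) \<Rightarrow> ('d \<Rightarrow> nat) \<Rightarrow> real" where
  "jackson_gen lam mu P f y =
     infsum (\<lambda>z. jackson_kernel lam mu P (\<lambda>k. int (z k) - int (y k)) * (f z - f y)) UNIV"

definition kernel_irreducible :: "(('d \<Rightarrow> int) \<Rightarrow> real) \<Rightarrow> bool" where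
  "kernel_irreducible k \<longleftrightarrow> (\<forall>y z. (y, z) \<in> {(a, b). k (b - a) > 0}\<^sup>*)"

definition norm_at_top :: "('d::finite \<Rightarrow> nat) filter" where
  "norm_at_top = filtercomap (\<lambda>x. \<Sum>i\<in>UNIV. x i) at_top"

definition h_gamma :: "('d::finite \<Rightarrow> real) \<Rightarrow> real \<Rightarrow> ('d \<Rightarrow> nat) \<Rightarrow> real" where
  "h_gamma \<gamma> q x = (\<Sum>i\<in>UNIV. (1 + \<gamma> i) ^ (x i) * (1 + q * \<gamma> i) ^ (\<Sum>j\<in>UNIV - {i}. x j))"

end

theory Submission
  imports Defs
begin


definition up :: "'d \<Rightarrow> ('d \<Rightarrow> nat) \<Rightarrow> ('d \<Rightarrow> nat)" where
  "up i y = y(i := Suc (y i))"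
definition down :: "'d \<Rightarrow> ('d \<Rightarrow> nat) \<Rightarrow> ('d \<Rightarrow> nat)" where
  "down i y = y(i := y i - 1)"
definition mv :: "'d \<Rightarrow> 'd \<Rightarrow> ('d \<Rightarrow> nat) \<Rightarrow> ('d \<Rightarrow> nat)" where
  "mv i j y = (y(i := y i - 1))(j := Suc (y j))"

lemma diff_up: "((\<lambda>k. int (z k) - int (y k)) = unit_vec i) \<longleftrightarrow> z = up i y"
proof
  assume h: "(\<lambda>k. int (z k) - int (y k)) = unit_vec i"
  show "z = up i y"
  proof
    fix k from fun_cong[OF h, of k] show "z k = up i y k"
      by (auto simp: unit_vec_def up_def split: if_splits)
  qed
qed (auto simp: unit_vec_def up_def)

lemma diff_down: "((\<lambda>k. int (z k) - int (y k)) = - unit_vec i) \<longleftrightarrow> (1 \<le> y i \<and> z = down i y)"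
proof
  assume h: "(\<lambda>k. int (z k) - int (y k)) = - unit_vec i"
  have "1 \<le> y i" using fun_cong[OF h, of i] by (simp add: unit_vec_def)
  moreover have "z = down i y"
  proof
    fix k from fun_cong[OF h, of k] show "z k = down i y k"
      by (auto simp: unit_vec_def down_def split: if_splits)
  qed
  ultimately show "1 \<le> y i \<and> z = down i y" by simp
qed (auto simp: unit_vec_def down_def)

lemma diff_mv: assumes "j \<noteq> i"
  shows "((\<lambda>k. int (z k) - int (y k)) = unit_vec j - unit_vec i) \<longleftrightarrow> (1 \<le> y i \<and> z = mv i j y)"
proof
  assume h: "(\<lambda>k. int (z k) - int (y k)) = unit_vec j - unit_vec i"
  have "1 \<le> y i" using fun_cong[OF h, of i] assms by (simp add: unit_vec_def)
  moreover have "z = mv i j y"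
  proof
    fix k from fun_cong[OF h, of k] assms show "z k = mv i j y k"
      by (auto simp: unit_vec_def mv_def split: if_splits)
  qed
  ultimately show "1 \<le> y i \<and> z = mv i j y" by simp
qed (use assms in \<open>auto simp: unit_vec_def mv_def\<close>)

lemma has_sum_point: "((\<lambda>z. if z = a then c z else 0) has_sum c a) UNIV"
proof -
  have "((\<lambda>z. if z = a then c z else 0) has_sum c a) {a}"
    by (rule has_sum_finiteI) auto
  then show ?thesis
    by (rule has_sum_cong_neutral[THEN iffD1, rotated -1]) auto
qed

lemma has_sum_finsum:
  fixes g :: "'i \<Rightarrow> 'a \<Rightarrow> real"
  assumes "finite I" "\<And>i. i \<in> I \<Longrightarrow> (g i has_sum s i) UNIV"
  shows "((\<lambda>z. \<Sum>i\<in>I. g i z) has_sum (\<Sum>i\<in>I. s i)) UNIV"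
  using assms
proof (induction I rule: finite_induct)
  case empty then show ?case by simp
next
  case (insert x F)
  then show ?case by (simp add: has_sum_add)
qed

definition genF ::
  "('d::finite \<Rightarrow> real) \<Rightarrow> ('d \<Rightarrow> real) \<Rightarrow> ('d \<Rightarrow> 'd \<Rightarrow> real)
     \<Rightarrow> (('d \<Rightarrow> nat) \<Rightarrow> real) \<Rightarrow> ('d \<Rightarrow> nat) \<Rightarrow> real" where
  "genF lam mu P f y = (\<Sum>i\<in>UNIV. lam i * (f (up i y) - f y)
      + (if 1 \<le> y i then mu i * exit_prob P i * (f (down i y) - f y) else 0)
      + (\<Sum>j\<in>UNIV. if j \<noteq> i \<and> 1 \<le> y i then mu i * P i j * (f (mv i j y) - f y) else 0))"

lemma gen_eq: "jackson_gen lam mu P f y = genF lam mu P f y"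
proof -
  let ?D = "\<lambda>z. f z - f y"
  have pw: "jackson_kernel lam mu P (\<lambda>k. int (z k) - int (y k)) * (f z - f y) =
     (\<Sum>i\<in>UNIV. (if z = up i y then lam i * ?D z else 0)
       + (if z = down i y then (if 1 \<le> y i then mu i * exit_prob P i * ?D z else 0) else 0)
       + (\<Sum>j\<in>UNIV. if z = mv i j y then (if j \<noteq> i \<and> 1 \<le> y i then mu i * P i j * ?D z else 0) else 0))" for z
    unfolding jackson_kernel_def sum_distrib_right distrib_right
    apply (intro sum.cong refl arg_cong2[where f="(+)"])
    subgoal for i by (simp add: diff_up)
    subgoal for i by (auto simp: diff_down)
    subgoal for i j by (cases "j = i") (auto simp: diff_mv)
    done
  have hs: "((\<lambda>z. jackson_kernel lam mu P (\<lambda>k. int (z k) - int (y k)) * (f z - f y)) has_sum genF lam mu P f y) UNIV"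
    unfolding pw genF_def
    apply (rule has_sum_finsum, simp)
    apply (intro has_sum_add has_sum_finsum)
    subgoal for i using has_sum_point[of "up i y" "\<lambda>z. lam i * ?D z"] by simp
    subgoal for i using has_sum_point[of "down i y" "\<lambda>z. if 1 \<le> y i then mu i * exit_prob P i * ?D z else 0"] by simp
     apply simp
    subgoal for i j using has_sum_point[of "mv i j y" "\<lambda>z. if j \<noteq> i \<and> 1 \<le> y i then mu i * P i j * ?D z else 0"] by simp
    done
  then show ?thesis unfolding jackson_gen_def by (rule infsumI)
qed

lemma genF_sum: "genF lam mu P (\<lambda>x. \<Sum>i\<in>UNIV. g i x) y = (\<Sum>i\<in>UNIV. genF lam mu P (g i) y)"
proof -
  have "genF lam mu P (\<lambda>x. \<Sum>i\<in>UNIV. g i x) y = (\<Sum>k\<in>UNIV. \<Sum>i\<in>UNIV. lam k * (g i (up k y) - g i y)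
      + (if 1 \<le> y k then mu k * exit_prob P k * (g i (down k y) - g i y) else 0)
      + (\<Sum>j\<in>UNIV. if j \<noteq> k \<and> 1 \<le> y k then mu k * P k j * (g i (mv k j y) - g i y) else 0))"
    unfolding genF_def
    apply (rule sum.cong[OF refl])
    apply (simp only: sum.distrib sum_subtractf[symmetric] sum_distrib_left)
    apply (rule arg_cong2[where f="(+)"])
     apply (rule arg_cong2[where f="(+)"])
      apply simp
     apply (simp add: sum_subtractf sum_distrib_left)
    apply (subst sum.swap)
    apply (rule sum.cong[OF refl])
    apply (simp add: sum_subtractf sum_distrib_left)
    done
  also have "\<dots> = (\<Sum>i\<in>UNIV. genF lam mu P (g i) y)"
    unfolding genF_def by (rule sum.swap)
  finally show ?thesis .
qed


definition Tm :: "('d::finite \<Rightarrow> real) \<Rightarrow> real \<Rightarrow> 'd \<Rightarrow> ('d \<Rightarrow> nat) \<Rightarrow> real" where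
  "Tm \<gamma> q i x = (1 + \<gamma> i) ^ (x i) * (1 + q * \<gamma> i) ^ (\<Sum>j\<in>UNIV - {i}. x j)"

lemma h_gamma_Tm: "h_gamma \<gamma> q = (\<lambda>x. \<Sum>i\<in>UNIV. Tm \<gamma> q i x)"
  by (auto simp: h_gamma_def Tm_def)

lemma sum_upd_in: "finite A \<Longrightarrow> k \<in> A \<Longrightarrow> sum (x(k:=v)) A + x k = sum x A + (v::nat)"
  by (simp add: sum.remove[of A k] sum.cong[of "A - {k}" "A - {k}" "x(k:=v)" x])

lemma sum_upd_out: "k \<notin> A \<Longrightarrow> sum (x(k:=v)) A = sum x A"
  by (rule sum.cong) auto

context fixes \<gamma> :: "'d::finite \<Rightarrow> real" and q :: real and i :: 'd
begin

lemma T_up_i: "Tm \<gamma> q i (up i x) = (1 + \<gamma> i) * Tm \<gamma> q i x"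
  by (simp add: Tm_def up_def sum_upd_out)

lemma T_up_k: "k \<noteq> i \<Longrightarrow> Tm \<gamma> q i (up k x) = (1 + q * \<gamma> i) * Tm \<gamma> q i x"
  using sum_upd_in[of "UNIV - {i}" k x "Suc (x k)"]
  by (simp add: Tm_def up_def)

lemma T_down_i: "1 \<le> x i \<Longrightarrow> (1 + \<gamma> i) * Tm \<gamma> q i (down i x) = Tm \<gamma> q i x"
  by (cases "x i") (auto simp: Tm_def down_def sum_upd_out)

lemma T_down_k: "k \<noteq> i \<Longrightarrow> 1 \<le> x k \<Longrightarrow> (1 + q * \<gamma> i) * Tm \<gamma> q i (down k x) = Tm \<gamma> q i x"
proof -
  assume a: "k \<noteq> i" "1 \<le> x k"
  have "sum (down k x) (UNIV - {i}) + x k = sum x (UNIV - {i}) + (x k - 1)"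
    unfolding down_def using a by (intro sum_upd_in) auto
  then have e: "sum x (UNIV - {i}) = Suc (sum (down k x) (UNIV - {i}))" using a by simp
  have "down k x i = x i" using a by (simp add: down_def)
  then show ?thesis unfolding Tm_def e by simp
qed

lemma T_mv_i: "1 \<le> x i \<Longrightarrow> j \<noteq> i \<Longrightarrow> (1 + \<gamma> i) * Tm \<gamma> q i (mv i j x) = (1 + q * \<gamma> i) * Tm \<gamma> q i x"
  using sum_upd_in[of "UNIV - {i}" j "x(i := x i - 1)" "Suc (x j)"] sum_upd_out[of i "UNIV - {i}" x "x i - 1"]
  by (cases "x i") (auto simp: Tm_def mv_def)

lemma T_mv_k: "k \<noteq> i \<Longrightarrow> 1 \<le> x k \<Longrightarrow> (1 + q * \<gamma> i) * Tm \<gamma> q i (mv k i x) = (1 + \<gamma> i) * Tm \<gamma> q i x"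
proof -
  assume a: "k \<noteq> i" "1 \<le> x k"
  have e1: "sum (x(k := x k - 1)) (UNIV - {i}) + x k = sum x (UNIV - {i}) + (x k - 1)"
    using a by (intro sum_upd_in) auto
  have e2: "sum (mv k i x) (UNIV - {i}) = sum (x(k := x k - 1)) (UNIV - {i})"
    unfolding mv_def by (rule sum_upd_out) simp
  have e: "sum x (UNIV - {i}) = Suc (sum (mv k i x) (UNIV - {i}))" using e1 e2 a by simp
  have "mv k i x i = Suc (x i)" using a by (simp add: mv_def)
  then show ?thesis unfolding Tm_def e by simp
qed

lemma T_mv_other: "k \<noteq> i \<Longrightarrow> j \<noteq> i \<Longrightarrow> j \<noteq> k \<Longrightarrow> 1 \<le> x k \<Longrightarrow> Tm \<gamma> q i (mv k j x) = Tm \<gamma> q i x"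
proof -
  assume a: "k \<noteq> i" "j \<noteq> i" "j \<noteq> k" "1 \<le> x k"
  have e1: "sum (x(k := x k - 1)) (UNIV - {i}) + x k = sum x (UNIV - {i}) + (x k - 1)"
    using a by (intro sum_upd_in) auto
  have e2: "sum ((x(k := x k - 1))(j := Suc (x j))) (UNIV - {i}) + (x(k := x k - 1)) j = sum (x(k := x k - 1)) (UNIV - {i}) + Suc (x j)"
    using a by (intro sum_upd_in) auto
  have "sum (mv k j x) (UNIV - {i}) = sum x (UNIV - {i})"
    using e1 e2 a unfolding mv_def by simp
  moreover have "mv k j x i = x i" using a by (simp add: mv_def)
  ultimately show ?thesis unfolding Tm_def by simp
qed

end
lemma genF_Tm:
  fixes \<gamma> :: "'d::finite \<Rightarrow> real"
  assumes ga: "1 + \<gamma> i > 0" and gb: "\<And>k. k \<noteq> i \<Longrightarrow> 1 + q * \<gamma> i > 0" and Pd: "P i i = 0"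
  shows "genF lam mu P (Tm \<gamma> q i) x = Tm \<gamma> q i x * (\<Sum>k\<in>UNIV.
     if k = i then lam i * \<gamma> i + (if 1 \<le> x i then mu i * (exit_prob P i * (1 / (1 + \<gamma> i) - 1)
            + (\<Sum>j\<in>UNIV. P i j) * ((1 + q * \<gamma> i) / (1 + \<gamma> i) - 1)) else 0)
     else lam k * (q * \<gamma> i) + (if 1 \<le> x k then mu k * (exit_prob P k * (1 / (1 + q * \<gamma> i) - 1)
            + P k i * ((1 + \<gamma> i) / (1 + q * \<gamma> i) - 1)) else 0))"
  unfolding genF_def sum_distrib_left
proof (rule sum.cong[OF refl])
  fix k
  let ?T = "Tm \<gamma> q i"
  let ?a = "1 + \<gamma> i" and ?b = "1 + q * \<gamma> i"
  show "lam k * (?T (up k x) - ?T x) +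
         (if 1 \<le> x k then mu k * exit_prob P k * (?T (down k x) - ?T x) else 0) +
         (\<Sum>j\<in>UNIV. if j \<noteq> k \<and> 1 \<le> x k then mu k * P k j * (?T (mv k j x) - ?T x) else 0) =
        ?T x * (if k = i then lam i * \<gamma> i + (if 1 \<le> x i then mu i * (exit_prob P i * (1 / ?a - 1)
            + (\<Sum>j\<in>UNIV. P i j) * (?b / ?a - 1)) else 0)
     else lam k * (q * \<gamma> i) + (if 1 \<le> x k then mu k * (exit_prob P k * (1 / ?b - 1)
            + P k i * (?a / ?b - 1)) else 0))"
  proof (cases "k = i")
    case True
    have A: "lam k * (?T (up k x) - ?T x) = ?T x * (lam i * \<gamma> i)"
      using True T_up_i[where \<gamma>=\<gamma> and q=q and i=i and x=x] by (simp add: algebra_simps)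
    have B: "(if 1 \<le> x k then mu k * exit_prob P k * (?T (down k x) - ?T x) else 0)
        = ?T x * (if 1 \<le> x i then mu i * exit_prob P i * (1 / ?a - 1) else 0)"
    proof (cases "1 \<le> x i")
      case True2: True
      have "?T (down i x) = ?T x / ?a" using T_down_i[where \<gamma>=\<gamma> and q=q and i=i and x=x] True2 ga
        by (simp add: field_simps)
      then show ?thesis using True True2 by (simp add: algebra_simps)
    qed (use True in simp)
    have C: "(\<Sum>j\<in>UNIV. if j \<noteq> k \<and> 1 \<le> x k then mu k * P k j * (?T (mv k j x) - ?T x) else 0)
        = ?T x * (if 1 \<le> x i then mu i * (\<Sum>j\<in>UNIV. P i j) * (?b / ?a - 1) else 0)"
    proof (cases "1 \<le> x i")
      case True2: True
      have "(\<Sum>j\<in>UNIV. if j \<noteq> k \<and> 1 \<le> x k then mu k * P k j * (?T (mv k j x) - ?T x) else 0)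
          = (\<Sum>j\<in>UNIV. ?T x * (mu i * P i j * (?b / ?a - 1)))"
      proof (rule sum.cong[OF refl])
        fix j show "(if j \<noteq> k \<and> 1 \<le> x k then mu k * P k j * (?T (mv k j x) - ?T x) else 0) = ?T x * (mu i * P i j * (?b / ?a - 1))"
        proof (cases "j = i")
          case False
          have "?T (mv i j x) = ?b / ?a * ?T x" using T_mv_i[where \<gamma>=\<gamma> and q=q and i=i and x=x and j=j] True2 False ga
            by (simp add: field_simps)
          then show ?thesis using True True2 False by (simp add: algebra_simps)
        qed (use True Pd in simp)
      qed
      also have "\<dots> = (?T x * mu i * (?b / ?a - 1)) * (\<Sum>j\<in>UNIV. P i j)"
        unfolding sum_distrib_left by (rule sum.cong) (auto simp: algebra_simps)
      finally show ?thesis using True2 by (simp add: algebra_simps)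
    qed (use True in simp)
    show ?thesis using A B C True by (simp add: algebra_simps)
  next
    case False
    have bpos: "?b > 0" using gb[OF False] .
    have A: "lam k * (?T (up k x) - ?T x) = ?T x * (lam k * (q * \<gamma> i))"
      using T_up_k[where \<gamma>=\<gamma> and q=q and i=i and k=k and x=x] False by (simp add: algebra_simps)
    have B: "(if 1 \<le> x k then mu k * exit_prob P k * (?T (down k x) - ?T x) else 0)
        = ?T x * (if 1 \<le> x k then mu k * exit_prob P k * (1 / ?b - 1) else 0)"
    proof (cases "1 \<le> x k")
      case True2: True
      have "?T (down k x) = ?T x / ?b" using T_down_k[where \<gamma>=\<gamma> and q=q and i=i and k=k and x=x] False True2 bpos
        by (simp add: field_simps)
      then show ?thesis using True2 by (simp add: algebra_simps)
    qed simp
    have C: "(\<Sum>j\<in>UNIV. if j \<noteq> k \<and> 1 \<le> x k then mu k * P k j * (?T (mv k j x) - ?T x) else 0)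
        = ?T x * (if 1 \<le> x k then mu k * P k i * (?a / ?b - 1) else 0)"
    proof (cases "1 \<le> x k")
      case True2: True
      have "(\<Sum>j\<in>UNIV. if j \<noteq> k \<and> 1 \<le> x k then mu k * P k j * (?T (mv k j x) - ?T x) else 0)
          = (\<Sum>j\<in>UNIV. if j = i then ?T x * (mu k * P k i * (?a / ?b - 1)) else 0)"
      proof (rule sum.cong[OF refl])
        fix j show "(if j \<noteq> k \<and> 1 \<le> x k then mu k * P k j * (?T (mv k j x) - ?T x) else 0) = (if j = i then ?T x * (mu k * P k i * (?a / ?b - 1)) else 0)"
        proof (cases "j = i")
          case True3: True
          have "?T (mv k i x) = ?a / ?b * ?T x" using T_mv_k[where \<gamma>=\<gamma> and q=q and i=i and k=k and x=x] False True2 bpos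
            by (simp add: field_simps)
          then show ?thesis using True2 False True3 by (simp add: algebra_simps)
        next
          case F3: False
          show ?thesis
          proof (cases "j = k")
            case False4: False
            show ?thesis using T_mv_other[where \<gamma>=\<gamma> and q=q and i=i and k=k and j=j and x=x] False F3 False4 True2 F3 by simp
          qed (use F3 in simp)
        qed
      qed
      then show ?thesis using True2 by simp
    qed simp
    show ?thesis using A B C False by (simp add: algebra_simps)
  qed
qed


locale jn =
  fixes lam mu \<nu> \<gamma> :: "'d::finite \<Rightarrow> real" and P :: "'d \<Rightarrow> 'd \<Rightarrow> real" and p :: real
  assumes lam_nonneg: "\<And>i. lam i \<ge> 0"
    and mu_pos: "\<And>i. mu i > 0"
    and P_nonneg: "\<And>i j. P i j \<ge> 0"
    and P_diag: "\<And>i. P i i = 0"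
    and traffic: "\<And>j. \<nu> j = lam j + (\<Sum>i\<in>UNIV. \<nu> i * P i j)"
    and P_const: "\<And>i j. i \<noteq> j \<Longrightarrow> P i j = p"
    and p_small: "p * (real CARD('d) - 1) < 1"
    and gamma_pos: "\<And>i. 0 < \<gamma> i"
    and gamma_bound: "\<And>i. \<gamma> i < mu i / \<nu> i - 1"
begin

definition "D = 1 - (real CARD('d) - 2) * p"
definition "q = p / D"
definition "C = 1 - (real CARD('d) - 1) * p\<^sup>2 / D"
definition "c i = - C * (\<gamma> i * (mu i / (1 + \<gamma> i) - \<nu> i))"
definition "e i = mu i * \<gamma> i * C / (1 + \<gamma> i)"

lemma card_minus: "real (card (UNIV - {i::'d})) = real CARD('d) - 1"
  by (simp add: card_Diff_singleton of_nat_diff)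

lemma card_ge2: assumes "a \<noteq> (b::'d)" shows "real CARD('d) \<ge> 2"
proof -
  have "card {a, b} \<le> CARD('d)" by (rule card_mono) auto
  then show ?thesis using assms by simp
qed

lemma multi: assumes "a \<noteq> (b::'d)"
  shows "p \<ge> 0" "D > 0" "q * D = p" "q \<ge> 0" "q < 1"
proof -
  show p0: "p \<ge> 0" using P_nonneg[of a b] P_const[OF assms] by simp
  have c2: "real CARD('d) \<ge> 2" by (rule card_ge2[OF assms])
  have "(real CARD('d) - 2) * p \<le> (real CARD('d) - 1) * p" using p0 by (intro mult_right_mono) auto
  then show Dp: "D > 0" unfolding D_def using p_small by (simp add: mult.commute)
  then show "q * D = p" unfolding q_def by simp
  show "q \<ge> 0" unfolding q_def using Dp p0 by simp
  have "p < D" unfolding D_def using p_small by (simp add: algebra_simps)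
  then show "q < 1" unfolding q_def using Dp by simp
qed

lemma rowsum: "(\<Sum>j\<in>UNIV. P k j) = (real CARD('d) - 1) * p"
proof -
  have "(\<Sum>j\<in>UNIV. P k j) = P k k + (\<Sum>j\<in>UNIV - {k}. P k j)"
    by (simp add: sum.remove)
  also have "\<dots> = (\<Sum>j\<in>UNIV - {k}. p)" using P_diag by (simp add: P_const)
  finally show ?thesis by (simp add: card_minus)
qed

lemma exit_eq: "exit_prob P k = 1 - (real CARD('d) - 1) * p"
  unfolding exit_prob_def rowsum ..

lemma C_eq: "C = 1 - (real CARD('d) - 1) * p * q"
  unfolding C_def q_def by (simp add: power2_eq_square)

lemma traffic_eq: "lam i + q * (\<Sum>k\<in>UNIV - {i}. lam k) = C * \<nu> i"
proof -
  define N where "N = (\<Sum>k\<in>UNIV. \<nu> k)"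
  have lamj: "lam j = (1 + p) * \<nu> j - p * N" for j
  proof -
    have "(\<Sum>i\<in>UNIV. \<nu> i * P i j) = \<nu> j * P j j + (\<Sum>i\<in>UNIV - {j}. \<nu> i * P i j)"
      by (simp add: sum.remove)
    also have "\<dots> = (\<Sum>i\<in>UNIV - {j}. \<nu> i * p)" using P_diag
      by (simp add: P_const)
    also have "\<dots> = p * (\<Sum>i\<in>UNIV - {j}. \<nu> i)"
      by (simp add: sum_distrib_left mult.commute)
    also have "\<dots> = p * (N - \<nu> j)" unfolding N_def
      by (simp add: sum_diff1)
    finally show ?thesis using traffic[of j] by (simp add: algebra_simps)
  qed
  have sl: "(\<Sum>k\<in>UNIV - {i}. lam k) = (1 + p) * (N - \<nu> i) - (real CARD('d) - 1) * p * N"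
    unfolding lamj N_def
    by (simp add: sum_subtractf sum_distrib_left[symmetric] sum_diff1 card_minus)
  show ?thesis
  proof (cases "\<exists>a b::'d. a \<noteq> b")
    case True
    then obtain a b :: 'd where ab: "a \<noteq> b" by blast
    have qD: "q * D = p" by (rule multi(3)[OF ab])
    have "lam i + q * (\<Sum>k\<in>UNIV - {i}. lam k) = (1 + p) * (1 - q) * \<nu> i + N * (q * D - p)"
      unfolding sl lamj[of i] D_def by (simp add: algebra_simps)
    also have "\<dots> = C * \<nu> i" unfolding qD C_eq
    proof -
      have "(1 + p) * (1 - q) = C" unfolding C_eq using qD unfolding D_def by (simp add: algebra_simps)
      then show "(1 + p) * (1 - q) * \<nu> i + N * (p - p) = (1 - (real CARD('d) - 1) * p * q) * \<nu> i"
        unfolding C_eq by simp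
    qed
    finally show ?thesis .
  next
    case False
    then have U: "UNIV = {i}" by auto
    then have "CARD('d) = 1" by (metis card.empty card_insert_disjoint empty_iff finite.emptyI One_nat_def)
    moreover have "(\<Sum>ia\<in>UNIV. \<nu> ia * P ia i) = 0" unfolding U using P_diag by simp
    then have "lam i = \<nu> i" using traffic[of i] by simp
    ultimately show ?thesis using U by (simp add: C_def)
  qed
qed

end

lemma frac_comb: "(b::real) \<noteq> 0 \<Longrightarrow> X * (u / b - 1) + Y * (v / b - 1) = (X*(u - b) + Y*(v - b))/b"
  by (simp add: field_simps)

context jn begin

lemma bracket_zero: assumes "k \<noteq> i"
  shows "exit_prob P k * (1 / (1 + q * \<gamma> i) - 1) + P k i * ((1 + \<gamma> i) / (1 + q * \<gamma> i) - 1) = 0"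
proof -
  have q0: "q \<ge> 0" and qD: "q * D = p" using multi[OF assms] by auto
  have b: "1 + q * \<gamma> i > 0" using q0 gamma_pos[of i] by (simp add: add_pos_nonneg)
  have "(1 - (real CARD('d) - 1) * p) * (1 - (1 + q * \<gamma> i)) + p * ((1 + \<gamma> i) - (1 + q * \<gamma> i)) = \<gamma> i * (p - q * D)"
    unfolding D_def by (simp add: algebra_simps)
  also have "\<dots> = 0" using qD by simp
  finally have z: "(1 - (real CARD('d) - 1) * p) * (1 - (1 + q * \<gamma> i)) + p * ((1 + \<gamma> i) - (1 + q * \<gamma> i)) = 0" .
  have "exit_prob P k * (1 / (1 + q * \<gamma> i) - 1) + P k i * ((1 + \<gamma> i) / (1 + q * \<gamma> i) - 1)
     = ((1 - (real CARD('d) - 1) * p) * (1 - (1 + q * \<gamma> i)) + p * ((1 + \<gamma> i) - (1 + q * \<gamma> i))) / (1 + q * \<gamma> i)"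
    using frac_comb[of "1 + q * \<gamma> i" "exit_prob P k" 1 "P k i" "1 + \<gamma> i"] b
    unfolding exit_eq P_const[OF assms] by simp
  then show ?thesis using z by simp
qed

lemma bracket_i:
  "exit_prob P i * (1 / (1 + \<gamma> i) - 1) + (\<Sum>j\<in>UNIV. P i j) * ((1 + q * \<gamma> i) / (1 + \<gamma> i) - 1) = - \<gamma> i * C / (1 + \<gamma> i)"
proof -
  have a: "1 + \<gamma> i > 0" using gamma_pos[of i] by simp
  have "(1 - (real CARD('d) - 1) * p) * (1 - (1 + \<gamma> i)) + (real CARD('d) - 1) * p * ((1 + q * \<gamma> i) - (1 + \<gamma> i)) = - \<gamma> i * C"
    unfolding C_eq by (simp add: algebra_simps)
  moreover have "exit_prob P i * (1 / (1 + \<gamma> i) - 1) + (\<Sum>j\<in>UNIV. P i j) * ((1 + q * \<gamma> i) / (1 + \<gamma> i) - 1)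
     = ((1 - (real CARD('d) - 1) * p) * (1 - (1 + \<gamma> i)) + (real CARD('d) - 1) * p * ((1 + q * \<gamma> i) - (1 + \<gamma> i))) / (1 + \<gamma> i)"
    using frac_comb[of "1 + \<gamma> i" "exit_prob P i" 1 "\<Sum>j\<in>UNIV. P i j" "1 + q * \<gamma> i"] a
    unfolding exit_eq rowsum by simp
  ultimately show ?thesis by simp
qed

lemma genF_Tm_eq: "genF lam mu P (Tm \<gamma> q i) x = Tm \<gamma> q i x * (c i + (if x i = 0 then e i else 0))"
proof -
  have ga: "1 + \<gamma> i > 0" using gamma_pos[of i] by simp
  have gb: "1 + q * \<gamma> i > 0" if "k \<noteq> i" for k
    using multi(4)[OF that] gamma_pos[of i] by (simp add: add_pos_nonneg)
  have "genF lam mu P (Tm \<gamma> q i) x = Tm \<gamma> q i x * (\<Sum>k\<in>UNIV.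
     if k = i then lam i * \<gamma> i + (if 1 \<le> x i then mu i * (exit_prob P i * (1 / (1 + \<gamma> i) - 1)
            + (\<Sum>j\<in>UNIV. P i j) * ((1 + q * \<gamma> i) / (1 + \<gamma> i) - 1)) else 0)
     else lam k * (q * \<gamma> i) + (if 1 \<le> x k then mu k * (exit_prob P k * (1 / (1 + q * \<gamma> i) - 1)
            + P k i * ((1 + \<gamma> i) / (1 + q * \<gamma> i) - 1)) else 0))"
    by (rule genF_Tm) (use ga gb P_diag in auto)
  also have "(\<Sum>k\<in>UNIV.
     if k = i then lam i * \<gamma> i + (if 1 \<le> x i then mu i * (exit_prob P i * (1 / (1 + \<gamma> i) - 1)
            + (\<Sum>j\<in>UNIV. P i j) * ((1 + q * \<gamma> i) / (1 + \<gamma> i) - 1)) else 0)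
     else lam k * (q * \<gamma> i) + (if 1 \<le> x k then mu k * (exit_prob P k * (1 / (1 + q * \<gamma> i) - 1)
            + P k i * ((1 + \<gamma> i) / (1 + q * \<gamma> i) - 1)) else 0))
     = (\<Sum>k\<in>UNIV. if k = i then lam i * \<gamma> i + (if 1 \<le> x i then - mu i * \<gamma> i * C / (1 + \<gamma> i) else 0)
          else lam k * (q * \<gamma> i))"
    by (rule sum.cong) (auto simp: bracket_zero bracket_i)
  also have "\<dots> = lam i * \<gamma> i + (if 1 \<le> x i then - mu i * \<gamma> i * C / (1 + \<gamma> i) else 0)
          + (\<Sum>k\<in>UNIV - {i}. lam k * (q * \<gamma> i))"
    by (simp add: sum.remove[of UNIV i])
  also have "\<dots> = \<gamma> i * (lam i + q * (\<Sum>k\<in>UNIV - {i}. lam k)) + (if 1 \<le> x i then - mu i * \<gamma> i * C / (1 + \<gamma> i) else 0)"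
    by (simp add: sum_distrib_left sum_distrib_right algebra_simps)
  also have "\<dots> = c i + (if x i = 0 then e i else 0)"
  proof -
    have r1: "- mu i * \<gamma> i * C / (1 + \<gamma> i) = - (\<gamma> i * C * (mu i / (1 + \<gamma> i)))" by simp
    have r2: "e i = \<gamma> i * C * (mu i / (1 + \<gamma> i))" unfolding e_def by simp
    show ?thesis unfolding traffic_eq c_def r1 r2 by (auto simp: algebra_simps)
  qed
  finally show ?thesis .
qed

lemma Tpos: "Tm \<gamma> q i x > 0"
proof (cases "\<exists>a b::'d. a \<noteq> b")
  case True
  then obtain a b :: 'd where "a \<noteq> b" by blast
  then have "q \<ge> 0" by (rule multi)
  then have "1 + q * \<gamma> i > 0" using gamma_pos[of i] by (simp add: add_pos_nonneg)
  then show ?thesis unfolding Tm_def using gamma_pos[of i] by simp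
next
  case False
  then have e: "UNIV - {i} = {}" by auto
  have "sum x (UNIV - {i}) = 0" unfolding e by simp
  then show ?thesis unfolding Tm_def using gamma_pos[of i] by simp
qed

lemma C_pos: "C > 0"
proof (cases "\<exists>a b::'d. a \<noteq> b")
  case True
  then obtain a b :: 'd where ab: "a \<noteq> b" by blast
  have p0: "p \<ge> 0" and q0: "q \<ge> 0" and q1: "q < 1" using multi[OF ab] by auto
  have c2: "real CARD('d) \<ge> 2" by (rule card_ge2[OF ab])
  have nn: "(real CARD('d) - 1) * p \<ge> 0" using p0 c2 by simp
  have "(real CARD('d) - 1) * p * q \<le> (real CARD('d) - 1) * p" using nn q1 by (simp add: mult_left_le)
  then show ?thesis unfolding C_eq using p_small by (simp add: mult.commute)
next
  case False
  then have "UNIV = {undefined::'d}" by auto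
  then have "CARD('d) = 1" by (metis card.empty card_insert_disjoint empty_iff finite.emptyI One_nat_def)
  then show ?thesis unfolding C_eq by simp
qed

lemma nu_pos: "\<nu> i > 0"
proof (rule ccontr)
  assume "\<not> \<nu> i > 0"
  then have "\<nu> i \<le> 0" by simp
  then have "mu i / \<nu> i \<le> 0" using mu_pos[of i] by (simp add: divide_nonneg_nonpos less_imp_le)
  then show False using gamma_bound[of i] gamma_pos[of i] by simp
qed

lemma f_pos: "\<gamma> i * (mu i / (1 + \<gamma> i) - \<nu> i) > 0"
proof -
  have "\<gamma> i + 1 < mu i / \<nu> i" using gamma_bound[of i] by simp
  then have "(\<gamma> i + 1) * \<nu> i < mu i" using nu_pos[of i] by (simp add: field_simps)
  then have "\<nu> i < mu i / (1 + \<gamma> i)" using gamma_pos[of i] by (simp add: field_simps)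
  then show ?thesis using gamma_pos[of i] by simp
qed

lemma e_nonneg: "e i \<ge> 0"
  unfolding e_def using mu_pos[of i] gamma_pos[of i] C_pos by simp

lemma gen_h: "jackson_gen lam mu P (h_gamma \<gamma> q) x = (\<Sum>i\<in>UNIV. Tm \<gamma> q i x * (c i + (if x i = 0 then e i else 0)))"
  unfolding gen_eq h_gamma_Tm genF_sum genF_Tm_eq ..

end

lemma pow_exp: "(b::real) > 0 \<Longrightarrow> b ^ n = exp (real n * ln b)"
  by (simp add: exp_of_nat_mult)

context jn begin

lemma negl:
  assumes gs: "(\<Sum>j\<in>UNIV. (Max (range (\<lambda>i. ln (1 + q * \<gamma> i))) - ln (1 + q * \<gamma> j))
                  / (ln (1 + \<gamma> j) - ln (1 + q * \<gamma> j))) < 1"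
    and eps: "\<epsilon> > 0"
  shows "\<exists>N. \<forall>x. N \<le> sum x UNIV \<longrightarrow> (\<forall>i. x i = 0 \<longrightarrow> Tm \<gamma> q i x \<le> \<epsilon> * (\<Sum>k\<in>UNIV. Tm \<gamma> q k x))"
proof (cases "\<exists>a b::'d. a \<noteq> b")
  case False
  show ?thesis
  proof (intro exI allI impI)
    fix x :: "'d \<Rightarrow> nat" and i assume N: "1 \<le> sum x UNIV" and xi: "x i = 0"
    from False have U: "UNIV = {i}" by auto
    have "sum x UNIV = 0" unfolding U using xi by simp
    with N show "Tm \<gamma> q i x \<le> \<epsilon> * (\<Sum>k\<in>UNIV. Tm \<gamma> q k x)" by simp
  qed
next
  case True
  then obtain a b :: 'd where ab: "a \<noteq> b" by blast
  have q0: "q \<ge> 0" and q1: "q < 1" using multi[OF ab] by auto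
  define la where "la j = ln (1 + \<gamma> j)" for j
  define lb where "lb j = ln (1 + q * \<gamma> j)" for j
  define Dl where "Dl j = la j - lb j" for j
  define M where "M = Max (range lb)"
  define r where "r j = (M - lb j) / Dl j" for j
  define \<theta> where "\<theta> = (\<Sum>j\<in>UNIV. r j)"
  define \<delta> where "\<delta> = (1 - \<theta>) / real CARD('d)"
  define \<eta> where "\<eta> = Min (range Dl)"
  have bpos: "1 + q * \<gamma> j > 0" for j using q0 gamma_pos[of j] by (simp add: add_pos_nonneg)
  have Dlpos: "Dl j > 0" for j
  proof -
    have "q * \<gamma> j < 1 * \<gamma> j" using q1 gamma_pos[of j] by (intro mult_strict_right_mono) auto
    then have "1 + q * \<gamma> j < 1 + \<gamma> j" by simp
    then show ?thesis unfolding Dl_def la_def lb_def using bpos[of j] by simp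
  qed
  have eta_pos: "\<eta> > 0"
  proof -
    have "\<eta> \<in> range Dl" unfolding \<eta>_def by (rule Min_in) auto
    then show ?thesis using Dlpos by auto
  qed
  have eta_le: "\<eta> \<le> Dl j" for j unfolding \<eta>_def by (rule Min_le) auto
  have lbM: "lb j \<le> M" for j unfolding M_def by (rule Max_ge) auto
  have th1: "\<theta> < 1" using gs unfolding \<theta>_def r_def M_def Dl_def la_def lb_def by simp
  have cpos: "real CARD('d) > 0" by simp
  have dpos: "\<delta> > 0" unfolding \<delta>_def using th1 cpos by simp
  have dsum: "(\<Sum>j\<in>UNIV. r j + \<delta>) = 1" unfolding sum.distrib \<theta>_def[symmetric] \<delta>_def using cpos by simp
  define N where "N = nat \<lceil>1 / (\<epsilon> * \<delta> * \<eta>)\<rceil>"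
  have pe: "\<epsilon> * \<delta> * \<eta> > 0" using eps dpos eta_pos by simp
  show ?thesis
  proof (intro exI allI impI)
    fix x :: "'d \<Rightarrow> nat" and i assume NS: "N \<le> sum x UNIV" and xi: "x i = 0"
    define S where "S = sum x UNIV"
    have Sge: "real S \<ge> 1 / (\<epsilon> * \<delta> * \<eta>)"
      using NS unfolding S_def N_def by linarith
    obtain j where xj: "real (x j) \<ge> (r j + \<delta>) * real S"
    proof (rule ccontr)
      assume "\<not> thesis"
      with that have lt: "real (x j) < (r j + \<delta>) * real S" for j by (meson not_le)
      have "real S = (\<Sum>j\<in>UNIV. real (x j))" unfolding S_def by simp
      also have "\<dots> < (\<Sum>j\<in>UNIV. (r j + \<delta>) * real S)" by (rule sum_strict_mono) (auto intro: lt)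
      also have "\<dots> = real S" unfolding sum_distrib_right[symmetric] dsum by simp
      finally show False by simp
    qed
    have Rj: "real (sum x (UNIV - {j})) = real S - real (x j)"
      unfolding S_def by (simp add: sum.remove[of UNIV j])
    have Ri: "sum x (UNIV - {i}) = S"
      unfolding S_def using xi by (simp add: sum.remove[of UNIV i])
    have Tj: "Tm \<gamma> q j x = exp (real S * lb j + real (x j) * Dl j)"
    proof -
      have "Tm \<gamma> q j x = exp (real (x j) * la j) * exp (real (sum x (UNIV - {j})) * lb j)"
        unfolding Tm_def la_def lb_def using gamma_pos[of j] bpos[of j] by (simp add: pow_exp)
      also have "\<dots> = exp (real S * lb j + real (x j) * Dl j)"
        unfolding Rj Dl_def exp_add[symmetric] by (simp add: algebra_simps)
      finally show ?thesis .
    qed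
    have Ti: "Tm \<gamma> q i x = exp (real S * lb i)"
      unfolding Tm_def lb_def Ri using xi bpos[of i] by (simp add: pow_exp)
    have e1: "real (x j) * Dl j \<ge> (r j + \<delta>) * real S * Dl j"
      using xj Dlpos[of j] by (simp add: mult_right_mono)
    have e2: "(r j + \<delta>) * real S * Dl j = real S * (M - lb j) + \<delta> * real S * Dl j"
      unfolding r_def using Dlpos[of j] by (simp add: field_simps)
    have e3: "\<delta> * real S * Dl j \<ge> \<delta> * real S * \<eta>"
      using eta_le[of j] dpos by (simp add: mult_left_mono)
    have ex: "real S * lb j + real (x j) * Dl j \<ge> real S * M + \<delta> * real S * \<eta>"
      using e1 e2 e3 by (simp add: algebra_simps)
    have "real S * lb i \<le> real S * M" using lbM[of i] by (simp add: mult_left_mono)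
    then have "Tm \<gamma> q i x * exp (\<delta> * real S * \<eta>) \<le> exp (real S * M + \<delta> * real S * \<eta>)"
      unfolding Ti exp_add[symmetric] by simp
    also have "\<dots> \<le> Tm \<gamma> q j x" unfolding Tj using ex by simp
    also have "\<dots> \<le> (\<Sum>k\<in>UNIV. Tm \<gamma> q k x)"
      by (rule member_le_sum) (auto intro: less_imp_le Tpos)
    finally have A: "Tm \<gamma> q i x * exp (\<delta> * real S * \<eta>) \<le> (\<Sum>k\<in>UNIV. Tm \<gamma> q k x)" .
    have "1 / \<epsilon> \<le> \<delta> * real S * \<eta>"
    proof -
      have "1 / \<epsilon> = (\<delta> * \<eta>) * (1 / (\<epsilon> * \<delta> * \<eta>))" using eps dpos eta_pos by (simp add: field_simps)
      also have "\<dots> \<le> (\<delta> * \<eta>) * real S" using Sge dpos eta_pos by (intro mult_left_mono) auto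
      finally show ?thesis by (simp add: algebra_simps)
    qed
    also have "\<dots> \<le> exp (\<delta> * real S * \<eta>)"
      using exp_ge_add_one_self[of "\<delta> * real S * \<eta>"] by linarith
    finally have B: "1 \<le> \<epsilon> * exp (\<delta> * real S * \<eta>)" using eps by (simp add: field_simps)
    have "Tm \<gamma> q i x \<le> Tm \<gamma> q i x * (\<epsilon> * exp (\<delta> * real S * \<eta>))"
      using B Tpos[of i x] by simp
    also have "\<dots> = \<epsilon> * (Tm \<gamma> q i x * exp (\<delta> * real S * \<eta>))" by simp
    also have "\<dots> \<le> \<epsilon> * (\<Sum>k\<in>UNIV. Tm \<gamma> q k x)" using A eps by (simp add: mult_left_mono)
    finally show "Tm \<gamma> q i x \<le> \<epsilon> * (\<Sum>k\<in>UNIV. Tm \<gamma> q k x)" .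
  qed
qed

end


lemma eventually_norm: "eventually P norm_at_top \<longleftrightarrow> (\<exists>N. \<forall>x. N \<le> sum x UNIV \<longrightarrow> P x)"
  unfolding norm_at_top_def eventually_filtercomap eventually_at_top_linorder
proof
  assume "\<exists>Q. (\<exists>N. \<forall>n\<ge>N. Q n) \<and> (\<forall>x. Q (\<Sum>i\<in>UNIV. x i) \<longrightarrow> P x)"
  then show "\<exists>N. \<forall>x. N \<le> sum x UNIV \<longrightarrow> P x" by auto
next
  assume "\<exists>N. \<forall>x. N \<le> sum x UNIV \<longrightarrow> P x"
  then obtain N where "\<forall>x. N \<le> sum x UNIV \<longrightarrow> P x" by blast
  then show "\<exists>Q. (\<exists>N. \<forall>n\<ge>N. Q n) \<and> (\<forall>x. Q (\<Sum>i\<in>UNIV. x i) \<longrightarrow> P x)"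
    by (intro exI[of _ "\<lambda>n. N \<le> n"]) auto
qed

context jn begin

definition "fg i = \<gamma> i * (mu i / (1 + \<gamma> i) - \<nu> i)"
definition "m = - C * Min (range fg)"

lemma c_le_m: "c i \<le> m"
proof -
  have "Min (range fg) \<le> fg i" by (rule Min_le) auto
  then show ?thesis unfolding m_def c_def fg_def[symmetric] using C_pos by (simp add: mult_left_mono)
qed

lemma m_attained: "\<exists>i0. c i0 = m"
proof -
  have "Min (range fg) \<in> range fg" by (rule Min_in) auto
  then obtain i0 where "Min (range fg) = fg i0" by blast
  then have "c i0 = m" unfolding m_def c_def fg_def[symmetric] by simp
  then show ?thesis by blast
qed

lemma m_neg: "m < 0"
proof -
  have "Min (range fg) \<in> range fg" by (rule Min_in) auto
  then have "Min (range fg) > 0" using f_pos unfolding fg_def by auto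
  then show ?thesis unfolding m_def using C_pos by simp
qed

lemma hpos: "h_gamma \<gamma> q x > 0"
  unfolding h_gamma_Tm by (rule sum_pos) (auto intro: Tpos)

abbreviation "ff x \<equiv> jackson_gen lam mu P (h_gamma \<gamma> q) x / h_gamma \<gamma> q x"

lemma upper:
  assumes gs: "(\<Sum>j\<in>UNIV. (Max (range (\<lambda>i. ln (1 + q * \<gamma> i))) - ln (1 + q * \<gamma> j))
                  / (ln (1 + \<gamma> j) - ln (1 + q * \<gamma> j))) < 1"
    and eps: "\<epsilon> > 0"
  shows "\<exists>N. \<forall>x. N \<le> sum x UNIV \<longrightarrow> ff x \<le> m + \<epsilon>"
proof -
  define E where "E = (\<Sum>i\<in>UNIV. e i)"
  have E0: "E \<ge> 0" unfolding E_def by (rule sum_nonneg) (use e_nonneg in auto)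
  define \<epsilon>' where "\<epsilon>' = \<epsilon> / (E + 1)"
  have ep: "\<epsilon>' > 0" unfolding \<epsilon>'_def using eps E0 by simp
  obtain N where N: "\<And>x. N \<le> sum x UNIV \<Longrightarrow> (\<forall>i. x i = 0 \<longrightarrow> Tm \<gamma> q i x \<le> \<epsilon>' * (\<Sum>k\<in>UNIV. Tm \<gamma> q k x))"
    using negl[OF gs ep] by blast
  show ?thesis
  proof (intro exI allI impI)
    fix x :: "'d \<Rightarrow> nat" assume Nx: "N \<le> sum x UNIV"
    let ?h = "h_gamma \<gamma> q x"
    have hh: "?h = (\<Sum>k\<in>UNIV. Tm \<gamma> q k x)" by (simp add: h_gamma_Tm)
    have "jackson_gen lam mu P (h_gamma \<gamma> q) x = (\<Sum>i\<in>UNIV. Tm \<gamma> q i x * c i) + (\<Sum>i\<in>UNIV. if x i = 0 then e i * Tm \<gamma> q i x else 0)"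
      unfolding gen_h sum.distrib[symmetric] by (rule sum.cong) (auto simp: algebra_simps)
    also have "\<dots> \<le> (\<Sum>i\<in>UNIV. Tm \<gamma> q i x * m) + (\<Sum>i\<in>UNIV. e i * (\<epsilon>' * ?h))"
    proof (rule add_mono)
      show "(\<Sum>i\<in>UNIV. Tm \<gamma> q i x * c i) \<le> (\<Sum>i\<in>UNIV. Tm \<gamma> q i x * m)"
        by (rule sum_mono) (use c_le_m Tpos in \<open>auto intro: mult_left_mono less_imp_le\<close>)
      show "(\<Sum>i\<in>UNIV. if x i = 0 then e i * Tm \<gamma> q i x else 0) \<le> (\<Sum>i\<in>UNIV. e i * (\<epsilon>' * ?h))"
      proof (rule sum_mono)
        fix i
        have "0 \<le> e i * (\<epsilon>' * ?h)" using e_nonneg[of i] ep hpos[of x] by simp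
        moreover have "x i = 0 \<Longrightarrow> e i * Tm \<gamma> q i x \<le> e i * (\<epsilon>' * ?h)"
          using N[OF Nx] e_nonneg[of i] unfolding hh by (auto intro: mult_left_mono)
        ultimately show "(if x i = 0 then e i * Tm \<gamma> q i x else 0) \<le> e i * (\<epsilon>' * ?h)" by auto
      qed
    qed
    also have "\<dots> = (m + E * \<epsilon>') * ?h"
    proof -
      have s1: "(\<Sum>i\<in>UNIV. Tm \<gamma> q i x * m) = m * ?h" unfolding hh by (simp add: sum_distrib_left mult.commute)
      have s2: "(\<Sum>i\<in>UNIV. e i * (\<epsilon>' * ?h)) = E * (\<epsilon>' * ?h)" unfolding E_def by (simp add: sum_distrib_right)
      show ?thesis unfolding s1 s2 by (simp add: algebra_simps)
    qed
    finally have A: "jackson_gen lam mu P (h_gamma \<gamma> q) x \<le> (m + E * \<epsilon>') * ?h" .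
    have "E * \<epsilon>' \<le> \<epsilon>" unfolding \<epsilon>'_def using E0 eps by (simp add: field_simps)
    then have "(m + E * \<epsilon>') * ?h \<le> (m + \<epsilon>) * ?h" using hpos[of x] by (intro mult_right_mono) auto
    with A have "jackson_gen lam mu P (h_gamma \<gamma> q) x \<le> (m + \<epsilon>) * ?h" by linarith
    then show "ff x \<le> m + \<epsilon>" using hpos[of x] by (simp add: divide_le_eq)
  qed
qed

lemma lower:
  assumes gs: "(\<Sum>j\<in>UNIV. (Max (range (\<lambda>i. ln (1 + q * \<gamma> i))) - ln (1 + q * \<gamma> j))
                  / (ln (1 + \<gamma> j) - ln (1 + q * \<gamma> j))) < 1"
    and eps: "\<epsilon> > 0"
  shows "\<exists>x. N0 \<le> sum x UNIV \<and> ff x \<ge> m - \<epsilon>"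
proof -
  obtain i0 where i0: "c i0 = m" using m_attained by blast
  define K where "K = (\<Sum>i\<in>UNIV. \<bar>c i - m\<bar>)"
  have K0: "K \<ge> 0" unfolding K_def by (rule sum_nonneg) auto
  define \<epsilon>' where "\<epsilon>' = \<epsilon> / (K + 1)"
  have ep: "\<epsilon>' > 0" unfolding \<epsilon>'_def using eps K0 by simp
  obtain N where N: "\<And>x. N \<le> sum x UNIV \<Longrightarrow> (\<forall>i. x i = 0 \<longrightarrow> Tm \<gamma> q i x \<le> \<epsilon>' * (\<Sum>k\<in>UNIV. Tm \<gamma> q k x))"
    using negl[OF gs ep] by blast
  define S where "S = max N N0"
  define x where "x = (\<lambda>k::'d. if k = i0 then S else 0)"
  have sx: "sum x UNIV = S" unfolding x_def by simp
  have Nx: "N \<le> sum x UNIV" unfolding sx S_def by simp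
  let ?h = "h_gamma \<gamma> q x"
  have hh: "?h = (\<Sum>k\<in>UNIV. Tm \<gamma> q k x)" by (simp add: h_gamma_Tm)
  have "(m - K * \<epsilon>') * ?h = (\<Sum>i\<in>UNIV. Tm \<gamma> q i x * m) - (\<Sum>i\<in>UNIV. \<bar>c i - m\<bar> * (\<epsilon>' * ?h))"
  proof -
    have s1: "(\<Sum>i\<in>UNIV. Tm \<gamma> q i x * m) = m * ?h" unfolding hh by (simp add: sum_distrib_left mult.commute)
    have s2: "(\<Sum>i\<in>UNIV. \<bar>c i - m\<bar> * (\<epsilon>' * ?h)) = K * (\<epsilon>' * ?h)" unfolding K_def by (simp add: sum_distrib_right)
    show ?thesis unfolding s1 s2 by (simp add: algebra_simps)
  qed
  also have "\<dots> = (\<Sum>i\<in>UNIV. Tm \<gamma> q i x * m - \<bar>c i - m\<bar> * (\<epsilon>' * ?h))"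
    by (simp add: sum_subtractf)
  also have "\<dots> \<le> (\<Sum>i\<in>UNIV. Tm \<gamma> q i x * c i + (if x i = 0 then e i else 0) * Tm \<gamma> q i x)"
  proof (rule sum_mono)
    fix i
    have en: "0 \<le> (if x i = 0 then e i else 0) * Tm \<gamma> q i x" using e_nonneg[of i] Tpos[of i x] by simp
    have "Tm \<gamma> q i x * m - \<bar>c i - m\<bar> * (\<epsilon>' * ?h) \<le> Tm \<gamma> q i x * c i"
    proof (cases "i = i0")
      case True then show ?thesis using i0 by simp
    next
      case False
      then have "x i = 0" unfolding x_def by simp
      then have "Tm \<gamma> q i x \<le> \<epsilon>' * ?h" using N[OF Nx] unfolding hh by auto
      then have "\<bar>c i - m\<bar> * Tm \<gamma> q i x \<le> \<bar>c i - m\<bar> * (\<epsilon>' * ?h)" by (intro mult_left_mono) auto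
      moreover have "Tm \<gamma> q i x * (m - c i) \<le> \<bar>c i - m\<bar> * Tm \<gamma> q i x"
        using Tpos[of i x] by (simp add: mult.commute mult_right_mono)
      ultimately show ?thesis by (simp add: algebra_simps)
    qed
    with en show "Tm \<gamma> q i x * m - \<bar>c i - m\<bar> * (\<epsilon>' * ?h) \<le> Tm \<gamma> q i x * c i + (if x i = 0 then e i else 0) * Tm \<gamma> q i x"
      by linarith
  qed
  also have "\<dots> = jackson_gen lam mu P (h_gamma \<gamma> q) x"
    unfolding gen_h by (rule sum.cong) (auto simp: algebra_simps)
  finally have A: "(m - K * \<epsilon>') * ?h \<le> jackson_gen lam mu P (h_gamma \<gamma> q) x" .
  have "K * \<epsilon>' \<le> \<epsilon>" unfolding \<epsilon>'_def using K0 eps by (simp add: field_simps)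
  then have "(m - \<epsilon>) * ?h \<le> (m - K * \<epsilon>') * ?h" using hpos[of x] by (intro mult_right_mono) auto
  with A have "(m - \<epsilon>) * ?h \<le> jackson_gen lam mu P (h_gamma \<gamma> q) x" by linarith
  then have "ff x \<ge> m - \<epsilon>" using hpos[of x] by (simp add: le_divide_eq)
  moreover have "N0 \<le> sum x UNIV" unfolding sx S_def by simp
  ultimately show ?thesis by blast
qed

lemma limsup_main:
  assumes gs: "(\<Sum>j\<in>UNIV. (Max (range (\<lambda>i. ln (1 + q * \<gamma> i))) - ln (1 + q * \<gamma> j))
                  / (ln (1 + \<gamma> j) - ln (1 + q * \<gamma> j))) < 1"
  shows "Limsup norm_at_top (\<lambda>x. ereal (ff x)) = ereal m"
proof (rule antisym)
  show "Limsup norm_at_top (\<lambda>x. ereal (ff x)) \<le> ereal m"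
    unfolding Limsup_le_iff
  proof (intro allI impI)
    fix y :: ereal assume "y > ereal m"
    then obtain r where r: "ereal m < ereal r" "ereal r < y" using ereal_dense2 by blast
    have "m < r" using r by simp
    then obtain N where N: "\<And>x. N \<le> sum x UNIV \<Longrightarrow> ff x \<le> m + (r - m) / 2"
      using upper[OF gs, of "(r - m) / 2"] by auto
    show "\<forall>\<^sub>F x in norm_at_top. ereal (ff x) < y"
      unfolding eventually_norm
    proof (intro exI allI impI)
      fix x :: "'d \<Rightarrow> nat" assume "N \<le> sum x UNIV"
      then have "ff x \<le> m + (r - m) / 2" by (rule N)
      moreover have "m + (r - m) / 2 < r" using \<open>m < r\<close> by (simp add: field_simps)
      ultimately have "ff x < r" by (rule le_less_trans)
      then have "ereal (ff x) < ereal r" by simp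
      then show "ereal (ff x) < y" using r(2) by (rule less_trans)
    qed
  qed
  show "ereal m \<le> Limsup norm_at_top (\<lambda>x. ereal (ff x))"
  proof (rule ccontr)
    assume "\<not> ?thesis"
    then have lt: "Limsup norm_at_top (\<lambda>x. ereal (ff x)) < ereal m" by simp
    then obtain z where z: "Limsup norm_at_top (\<lambda>x. ereal (ff x)) < ereal z" "ereal z < ereal m"
      using ereal_dense2 by blast
    have "\<forall>\<^sub>F x in norm_at_top. ereal (ff x) < ereal z" by (rule Limsup_lessD[OF z(1)])
    then obtain N0 where N0: "\<And>x. N0 \<le> sum x UNIV \<Longrightarrow> ff x < z" unfolding eventually_norm by auto
    have "z < m" using z(2) by simp
    then obtain x where x: "N0 \<le> sum x UNIV" "ff x \<ge> m - (m - z)" using lower[OF gs, of "m - z" N0] by auto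
    have "ff x < z" by (rule N0[OF x(1)])
    with x(2) show False by simp
  qed
qed

end

theorem corollary3p2:
  fixes lam mu \<nu> \<gamma> :: "'d::finite \<Rightarrow> real" and P :: "'d \<Rightarrow> 'd \<Rightarrow> real" and p :: real
  assumes lam_nonneg: "\<And>i. lam i \<ge> 0"
    and mu_pos: "\<And>i. mu i > 0"
    and P_nonneg: "\<And>i j. P i j \<ge> 0"
    and P_diag: "\<And>i. P i i = 0"
    and P_substoch: "\<And>i. (\<Sum>j\<in>UNIV. P i j) \<le> 1"
    and hypA: "kernel_irreducible (jackson_kernel lam mu P)"
    and traffic: "\<And>j. \<nu> j = lam j + (\<Sum>i\<in>UNIV. \<nu> i * P i j)"
    and hypB: "\<And>i. \<nu> i < mu i"
    and P_const: "\<And>i j. i \<noteq> j \<Longrightarrow> P i j = p"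
    and p_small: "p * (real CARD('d) - 1) < 1"
    and gamma_pos: "\<And>i. 0 < \<gamma> i"
    and gamma_bound: "\<And>i. \<gamma> i < mu i / \<nu> i - 1"
    and gamma_sum: "(\<Sum>j\<in>UNIV.
          (Max (range (\<lambda>i. ln (1 + p / (1 - (real CARD('d) - 2) * p) * \<gamma> i)))
             - ln (1 + p / (1 - (real CARD('d) - 2) * p) * \<gamma> j))
          / (ln (1 + \<gamma> j) - ln (1 + p / (1 - (real CARD('d) - 2) * p) * \<gamma> j))) < 1"
  shows "Limsup norm_at_top
           (\<lambda>x. ereal (jackson_gen lam mu P (h_gamma \<gamma> (p / (1 - (real CARD('d) - 2) * p))) x
                        / h_gamma \<gamma> (p / (1 - (real CARD('d) - 2) * p)) x))
         = ereal (- (1 - (real CARD('d) - 1) * p\<^sup>2 / (1 - (real CARD('d) - 2) * p))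
                   * Min (range (\<lambda>i. \<gamma> i * (mu i / (1 + \<gamma> i) - \<nu> i))))
       \<and> - (1 - (real CARD('d) - 1) * p\<^sup>2 / (1 - (real CARD('d) - 2) * p))
           * Min (range (\<lambda>i. \<gamma> i * (mu i / (1 + \<gamma> i) - \<nu> i))) < 0"
proof -
  interpret jn lam mu \<nu> \<gamma> P p
    by (rule jn.intro) (fact lam_nonneg mu_pos P_nonneg P_diag traffic P_const p_small gamma_pos gamma_bound)+
  have qeq: "p / (1 - (real CARD('d) - 2) * p) = q" by (simp add: q_def D_def)
  have Ceq: "1 - (real CARD('d) - 1) * p\<^sup>2 / (1 - (real CARD('d) - 2) * p) = C" by (simp add: C_def D_def)
  have fgeq: "(\<lambda>i. \<gamma> i * (mu i / (1 + \<gamma> i) - \<nu> i)) = fg" by (rule ext) (simp add: fg_def)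
  have gs: "(\<Sum>j\<in>UNIV. (Max (range (\<lambda>i. ln (1 + q * \<gamma> i))) - ln (1 + q * \<gamma> j))
                  / (ln (1 + \<gamma> j) - ln (1 + q * \<gamma> j))) < 1"
    using gamma_sum unfolding qeq .
  have L: "Limsup norm_at_top (\<lambda>x. ereal (jackson_gen lam mu P (h_gamma \<gamma> q) x / h_gamma \<gamma> q x)) = ereal m"
    by (rule limsup_main[OF gs])
  from L m_neg show ?thesis unfolding qeq Ceq fgeq m_def by (rule conjI)
qed

end
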